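(* Let $G$ be a finite simple graph of order $n$ and let $u$ be a vertex of $G$. Then \[\mathrm{dp}_{G^{c}}(u)=\big(\mathrm{dp}(G)-\mathrm{dp}_G(u)-x^{\deg_G u}\big)^{\curlywedge (n-1)-}.\]
   Context: For a vertex $w$ of a simple graph $\Gamma$, the degree polynomial $\mathrm{dp}_\Gamma(w)\in\mathbb{Z}[x]$ is the polynomial in which the coefficient of $x^{i}$ is the number of neighbors of $w$ in $\Gamma$ having degree $i$ in $\Gamma$ ($\mathrm{dp}_\Gamma(w)=0$ if $w$ is isolated). The degree polynomial of the graph $\Gamma$ is $\mathrm{dp}(\Gamma)=\sum_{i\ge0} t_i x^i$, where $t_i$ is the number of vertices of $\Gamma$ of degree $i$ (so $t_0$ counts isolated vertices). For a polynomial $f=\sum_i a_i x^i$ with nonnegative integer coefficients and $\deg f\le m$, $f^{\curlywedge m-}=\sum_i a_i x^{m-i}$ (and $0^{\curlywedge m-}=0$). $G^{c}$ denotes the complement of $G$: same vertex set, with two distinct vertices adjacent in $G^c$ iff they are not adjacent in $G$. *)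

theory Defs
  imports "HOL-Computational_Algebra.Polynomial"
begin

definition simple_graph :: "'a set \<Rightarrow> ('a \<Rightarrow> 'a \<Rightarrow> bool) \<Rightarrow> bool" where
  "simple_graph V adj \<longleftrightarrow> finite V \<and> (\<forall>x y. adj x y \<longrightarrow> x \<in> V \<and> y \<in> V)
     \<and> (\<forall>x y. adj x y \<longrightarrow> adj y x) \<and> (\<forall>x. \<not> adj x x)"

definition neighbors :: "'a set \<Rightarrow> ('a \<Rightarrow> 'a \<Rightarrow> bool) \<Rightarrow> 'a \<Rightarrow> 'a set" where
  "neighbors V adj v = {w \<in> V. adj v w}"

definition degree_in :: "'a set \<Rightarrow> ('a \<Rightarrow> 'a \<Rightarrow> bool) \<Rightarrow> 'a \<Rightarrow> nat" where
  "degree_in V adj v = card (neighbors V adj v)"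

definition compl_adj :: "'a set \<Rightarrow> ('a \<Rightarrow> 'a \<Rightarrow> bool) \<Rightarrow> 'a \<Rightarrow> 'a \<Rightarrow> bool" where
  "compl_adj V adj x y \<longleftrightarrow> x \<in> V \<and> y \<in> V \<and> x \<noteq> y \<and> \<not> adj x y"

definition dp_vertex :: "'a set \<Rightarrow> ('a \<Rightarrow> 'a \<Rightarrow> bool) \<Rightarrow> 'a \<Rightarrow> int poly" where
  "dp_vertex V adj w = (\<Sum>v \<in> neighbors V adj w. monom 1 (degree_in V adj v))"

definition dp_graph :: "'a set \<Rightarrow> ('a \<Rightarrow> 'a \<Rightarrow> bool) \<Rightarrow> int poly" where
  "dp_graph V adj = (\<Sum>v \<in> V. monom 1 (degree_in V adj v))"

text \<open>f^{m-}: sum a_i x^(m-i) (intended for deg f \<le> m).\<close>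
definition poly_flip :: "nat \<Rightarrow> int poly \<Rightarrow> int poly" where
  "poly_flip m f = (\<Sum>i\<le>m. monom (coeff f i) (m - i))"

end

theory Submission
  imports Defs
begin

lemma flip_sum:
  assumes "finite A"
  shows "poly_flip m (sum g A) = (\<Sum>a\<in>A. poly_flip m (g a))"
  using assms
proof (induction A rule: finite_induct)
  case empty
  then show ?case by (simp add: poly_flip_def)
next
  case (insert x F)
  have "poly_flip m (sum g (insert x F)) = poly_flip m (g x + sum g F)"
    using insert by simp
  also have "\<dots> = poly_flip m (g x) + poly_flip m (sum g F)"
    unfolding poly_flip_def by (simp add: add_monom[symmetric] sum.distrib)
  finally show ?case using insert by simp
qed

lemma flip_monom:
  assumes "d \<le> m"
  shows "poly_flip m (monom 1 d) = monom 1 (m - d)"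
proof -
  have "poly_flip m (monom 1 d) = (\<Sum>i\<le>m. if d = i then monom 1 (m - i) else 0)"
    unfolding poly_flip_def by (intro sum.cong) (auto simp: coeff_monom)
  also have "\<dots> = monom 1 (m - d)" using assms by (simp add: sum.delta)
  finally show ?thesis .
qed

theorem theorem4p19:
  fixes V :: "'a set" and adj :: "'a \<Rightarrow> 'a \<Rightarrow> bool" and u :: 'a and n :: nat
  assumes "simple_graph V adj" and "card V = n" and "u \<in> V"
  shows "dp_vertex V (compl_adj V adj) u
    = poly_flip (n - 1) (dp_graph V adj - dp_vertex V adj u - monom 1 (degree_in V adj u))"
proof -
  have fin: "finite V" and sub: "\<And>x y. adj x y \<Longrightarrow> x \<in> V \<and> y \<in> V"
    and sym: "\<And>x y. adj x y \<Longrightarrow> adj y x" and irr: "\<And>x. \<not> adj x x"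
    using assms(1) unfolding simple_graph_def by blast+
  define N where "N = neighbors V adj u"
  define W where "W = V - insert u N"
  have NV: "N \<subseteq> V" unfolding N_def neighbors_def by auto
  have uN: "u \<notin> N" unfolding N_def neighbors_def using irr by auto
  have cn: "neighbors V (compl_adj V adj) u = W"
    unfolding W_def N_def neighbors_def compl_adj_def using assms(3) by auto
  have degc: "degree_in V (compl_adj V adj) v = (n - 1) - degree_in V adj v" if "v \<in> V" for v
  proof -
    have e: "neighbors V (compl_adj V adj) v = V - insert v (neighbors V adj v)"
      unfolding neighbors_def compl_adj_def using that by auto
    have s: "insert v (neighbors V adj v) \<subseteq> V" using that unfolding neighbors_def by auto
    have nv: "v \<notin> neighbors V adj v" unfolding neighbors_def using irr by auto
    have f: "finite (neighbors V adj v)" using fin unfolding neighbors_def by auto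
    show ?thesis unfolding degree_in_def e
      using card_Diff_subset[OF finite_subset[OF s fin] s] f nv assms(2) by simp
  qed
  have degle: "degree_in V adj v \<le> n - 1" if "v \<in> V" for v
  proof -
    have s: "insert v (neighbors V adj v) \<subseteq> V" using that unfolding neighbors_def by auto
    have nv: "v \<notin> neighbors V adj v" unfolding neighbors_def using irr by auto
    have f: "finite (neighbors V adj v)" using fin unfolding neighbors_def by auto
    have "card (insert v (neighbors V adj v)) \<le> n" using card_mono[OF fin s] assms(2) by simp
    then show ?thesis unfolding degree_in_def using f nv by simp
  qed
  have finW: "finite W" using fin unfolding W_def by auto
  have finN: "finite N" using NV fin finite_subset by blast
  have Vsplit: "V = W \<union> (insert u N)" unfolding W_def using NV assms(3) by auto
  have "dp_graph V adj = (\<Sum>v\<in>W. monom 1 (degree_in V adj v)) + (\<Sum>v\<in>insert u N. monom 1 (degree_in V adj v))"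
    unfolding dp_graph_def Vsplit by (rule sum.union_disjoint) (use finW finN W_def in auto)
  also have "(\<Sum>v\<in>insert u N. monom 1 (degree_in V adj v)) = monom 1 (degree_in V adj u) + dp_vertex V adj u"
    unfolding dp_vertex_def N_def[symmetric] using finN uN by simp
  finally have eq: "dp_graph V adj - dp_vertex V adj u - monom 1 (degree_in V adj u)
      = (\<Sum>v\<in>W. monom 1 (degree_in V adj v))" by simp
  have WV: "W \<subseteq> V" unfolding W_def by auto
  have "poly_flip (n - 1) (\<Sum>v\<in>W. monom 1 (degree_in V adj v))
        = dp_vertex V (compl_adj V adj) u"
    unfolding flip_sum[OF finW] dp_vertex_def cn
    using WV degc degle by (intro sum.cong) (auto simp: flip_monom subset_iff)
  then show ?thesis using eq by simp
qed

end
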